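(* Define the relation $\succeq^5$ on $\mathcal{A}$ by $\mathbf{A}\succeq^5\mathbf{B}\iff\nu(\mathbf{A})\le\nu(\mathbf{B})$, where for $\mathbf{A}=[a_{ij}]$ of size $n$, $\nu(\mathbf{A})=\min_{1\le i<j<k\le n}\max\{a_{ij}a_{jk}/a_{ik},\ a_{ik}/(a_{ij}a_{jk})\}$. Then $\succeq^5$ is an inconsistency ranking that satisfies PR, IIP, HTE, SI and RED, but does not satisfy MON.
   Context: A pairwise comparison matrix of size $n$ is a matrix $\mathbf{A}=[a_{ij}]\in\mathbb{R}^{n\times n}$ with all entries positive and $a_{ji}=1/a_{ij}$ for all $i,j$. Let $\mathcal{A}$ denote the set of all pairwise comparison matrices of all sizes $n\ge 3$. For $\mathbf{A}\in\mathcal{A}$ of size $n$ and $3\le m\le n$, a submatrix of $\mathbf{A}$ is a matrix $\mathbf{B}=[b_{ij}]$ of size $m$ with $b_{ij}=a_{\sigma(i)\sigma(j)}$ for some strictly increasing map $\sigma:\{1,\dots,m\}\to\{1,\dots,n\}$. A triad is a pairwise comparison matrix of size $3$; a triad of $\mathbf{A}$ is a submatrix of $\mathbf{A}$ of size $3$ (when $n=3$, $\mathbf{A}$ is its own unique triad). A triad $\mathbf{T}$ is written $\mathbf{T}=(t_1;t_2;t_3)$, meaning $t_{12}=t_1$, $t_{13}=t_2$, $t_{23}=t_3$ (the remaining entries are determined by reciprocity); $\mathbf{T}^\top$ denotes its transpose, i.e. the triad $(1/t_1;1/t_2;1/t_3)$. An inconsistency ranking is a complete and transitive binary relation $\succeq$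 on $\mathcal{A}$; $\mathbf{A}\sim\mathbf{B}$ means $\mathbf{A}\succeq\mathbf{B}$ and $\mathbf{B}\succeq\mathbf{A}$; $\mathbf{A}\preceq\mathbf{B}$ means $\mathbf{B}\succeq\mathbf{A}$. Properties of an inconsistency ranking $\succeq$: (PR) for all $s_2,t_2\ge 1$: $(1;s_2;1)\succeq(1;t_2;1)\iff s_2\le t_2$. (IIP) $\mathbf{T}\sim\mathbf{T}^\top$ for every triad $\mathbf{T}$. (HTE) $(1;t_2;t_3)\sim(1;t_2/t_3;1)$ for all $t_2,t_3>0$. (SI) $(t_1;t_2;t_3)\sim(kt_1;k^2t_2;kt_3)$ for all $t_1,t_2,t_3>0$ and all $k>0$. (MON) $\mathbf{A}\preceq\mathbf{T}$ for every $\mathbf{A}\in\mathcal{A}$ and every triad $\mathbf{T}$ of $\mathbf{A}$. (RED) every $\mathbf{A}\in\mathcal{A}$ has a triad $\mathbf{T}$ with $\mathbf{A}\sim\mathbf{T}$. *)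

theory Defs
  imports Complex_Main
begin

text \<open>A pairwise comparison matrix of size n is represented as a pair (n, a) with
  a :: nat => nat => real, indices 0..n-1 (0-based), and a canonical value 0 outside
  the index range, so that every matrix has a unique representation.\<close>

type_synonym pcm = "nat \<times> (nat \<Rightarrow> nat \<Rightarrow> real)"

definition PCM :: "pcm set" where
  "PCM = {(n, a). n \<ge> 3 \<and>
      (\<forall>i<n. \<forall>j<n. a i j > 0 \<and> a j i = 1 / a i j) \<and>
      (\<forall>i j. (n \<le> i \<or> n \<le> j) \<longrightarrow> a i j = 0)}"

definition submatrix :: "pcm \<Rightarrow> nat \<Rightarrow> (nat \<Rightarrow> nat) \<Rightarrow> pcm" where
  "submatrix A m \<sigma> = (m, \<lambda>i j. if i < m \<and> j < m then snd A (\<sigma> i) (\<sigma> j) else 0)"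

definition is_submatrix :: "pcm \<Rightarrow> pcm \<Rightarrow> bool" where
  "is_submatrix B A \<longleftrightarrow> (\<exists>m \<sigma>. 3 \<le> m \<and> m \<le> fst A \<and>
      (\<forall>i j. i < j \<and> j < m \<longrightarrow> \<sigma> i < \<sigma> j) \<and> (\<forall>i<m. \<sigma> i < fst A) \<and>
      B = submatrix A m \<sigma>)"

text \<open>The triad (t1; t2; t3): t_12 = t1, t_13 = t2, t_23 = t3 (0-based indices).\<close>
definition triad :: "real \<Rightarrow> real \<Rightarrow> real \<Rightarrow> pcm" where
  "triad t1 t2 t3 = (3, \<lambda>i j.
     if i = 0 \<and> j = 1 then t1 else if i = 1 \<and> j = 0 then 1 / t1
     else if i = 0 \<and> j = 2 then t2 else if i = 2 \<and> j = 0 then 1 / t2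
     else if i = 1 \<and> j = 2 then t3 else if i = 2 \<and> j = 1 then 1 / t3
     else if i = j \<and> i < 3 then 1 else 0)"

definition is_triad_of :: "pcm \<Rightarrow> pcm \<Rightarrow> bool" where
  "is_triad_of T A \<longleftrightarrow> is_submatrix T A \<and> fst T = 3"

definition transp_pcm :: "pcm \<Rightarrow> pcm" where
  "transp_pcm A = (fst A, \<lambda>i j. snd A j i)"

text \<open>An inconsistency ranking: complete and transitive relation on PCM.
  (A, B) \<in> R means A \<succeq> B.\<close>
definition inconsistency_ranking :: "pcm rel \<Rightarrow> bool" where
  "inconsistency_ranking R \<longleftrightarrow> R \<subseteq> PCM \<times> PCM \<and>
     (\<forall>A\<in>PCM. \<forall>B\<in>PCM. (A, B) \<in> R \<or> (B, A) \<in> R) \<and>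
     (\<forall>A B C. (A, B) \<in> R \<longrightarrow> (B, C) \<in> R \<longrightarrow> (A, C) \<in> R)"

definition sim :: "pcm rel \<Rightarrow> pcm \<Rightarrow> pcm \<Rightarrow> bool" where
  "sim R A B \<longleftrightarrow> (A, B) \<in> R \<and> (B, A) \<in> R"

definition PR :: "pcm rel \<Rightarrow> bool" where
  "PR R \<longleftrightarrow> (\<forall>s2 t2. s2 \<ge> 1 \<longrightarrow> t2 \<ge> 1 \<longrightarrow>
      ((triad 1 s2 1, triad 1 t2 1) \<in> R \<longleftrightarrow> s2 \<le> t2))"

definition IIP :: "pcm rel \<Rightarrow> bool" where
  "IIP R \<longleftrightarrow> (\<forall>t1 t2 t3. t1 > 0 \<longrightarrow> t2 > 0 \<longrightarrow> t3 > 0 \<longrightarrow>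
      sim R (triad t1 t2 t3) (transp_pcm (triad t1 t2 t3)))"

definition HTE :: "pcm rel \<Rightarrow> bool" where
  "HTE R \<longleftrightarrow> (\<forall>t2 t3. t2 > 0 \<longrightarrow> t3 > 0 \<longrightarrow>
      sim R (triad 1 t2 t3) (triad 1 (t2 / t3) 1))"

definition SI :: "pcm rel \<Rightarrow> bool" where
  "SI R \<longleftrightarrow> (\<forall>t1 t2 t3 k. t1 > 0 \<longrightarrow> t2 > 0 \<longrightarrow> t3 > 0 \<longrightarrow> k > 0 \<longrightarrow>
      sim R (triad t1 t2 t3) (triad (k * t1) (k\<^sup>2 * t2) (k * t3)))"

definition MON :: "pcm rel \<Rightarrow> bool" where
  "MON R \<longleftrightarrow> (\<forall>A\<in>PCM. \<forall>T. is_triad_of T A \<longrightarrow> (T, A) \<in> R)"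

definition RED :: "pcm rel \<Rightarrow> bool" where
  "RED R \<longleftrightarrow> (\<forall>A\<in>PCM. \<exists>T. is_triad_of T A \<and> sim R A T)"

definition nu :: "pcm \<Rightarrow> real" where
  "nu A = Min ((\<lambda>(i, j, k). max (snd A i j * snd A j k / snd A i k)
                                   (snd A i k / (snd A i j * snd A j k)))
               ` {(i, j, k). i < j \<and> j < k \<and> k < fst A})"

definition R5 :: "pcm rel" where
  "R5 = {(A, B). A \<in> PCM \<and> B \<in> PCM \<and> nu A \<le> nu B}"

end

theory Submission
  imports Defs
begin

lemma idx3: "{(i, j, k). i < j \<and> j < k \<and> k < (3::nat)} = {(0,1,2)}"
  by (auto simp: less_Suc_eq numeral_3_eq_3)

lemma nu3: "fst A = 3 \<Longrightarrow> nu A = max (snd A 0 1 * snd A 1 2 / snd A 0 2)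
                                   (snd A 0 2 / (snd A 0 1 * snd A 1 2))"
  unfolding nu_def by (simp add: idx3)

lemma nu_triad: "nu (triad t1 t2 t3) = max (t1 * t3 / t2) (t2 / (t1 * t3))"
  by (simp add: nu3 triad_def)

lemma triad_PCM: "t1 > 0 \<Longrightarrow> t2 > 0 \<Longrightarrow> t3 > 0 \<Longrightarrow> triad t1 t2 t3 \<in> PCM"
  unfolding PCM_def triad_def by (auto simp: less_Suc_eq numeral_3_eq_3)

lemma transp_triad_PCM: "t1 > 0 \<Longrightarrow> t2 > 0 \<Longrightarrow> t3 > 0 \<Longrightarrow> transp_pcm (triad t1 t2 t3) \<in> PCM"
  unfolding PCM_def triad_def transp_pcm_def by (auto simp: less_Suc_eq numeral_3_eq_3)

lemma nu_transp_triad: "nu (transp_pcm (triad t1 t2 t3)) = max (t1 * t3 / t2) (t2 / (t1 * t3))"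
  by (simp add: nu3 triad_def transp_pcm_def transp_pcm_def field_simps max.commute)

lemma sim_R5: "A \<in> PCM \<Longrightarrow> B \<in> PCM \<Longrightarrow> nu A = nu B \<Longrightarrow> sim R5 A B"
  by (simp add: sim_def R5_def)

lemma ranking: "inconsistency_ranking R5"
  unfolding inconsistency_ranking_def R5_def by auto

lemma nu_pr: "s \<ge> 1 \<Longrightarrow> nu (triad 1 s 1) = (s::real)"
  by (simp add: nu_triad max_def field_simps) (smt (verit) mult_le_cancel_right1)

lemma PR5: "PR R5"
  unfolding PR_def R5_def
  by (auto simp: triad_PCM nu_pr)

lemma IIP5: "IIP R5"
  unfolding IIP_def
  by (auto intro!: sim_R5 triad_PCM transp_triad_PCM simp: nu_triad nu_transp_triad)

lemma HTE5: "HTE R5"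
  unfolding HTE_def
  by (auto intro!: sim_R5 triad_PCM simp: nu_triad max_def field_simps)

lemma SI5: "SI R5"
  unfolding SI_def
  by (auto intro!: sim_R5 triad_PCM simp: nu_triad power2_eq_square field_simps)

lemma RED5: "RED R5"
  unfolding RED_def
proof
  fix A assume A: "A \<in> PCM"
  obtain n a where na: "A = (n, a)" by fastforce
  have H: "n \<ge> 3 \<and> (\<forall>i<n. \<forall>j<n. a i j > 0 \<and> a j i = 1 / a i j)"
    using A unfolding na PCM_def mem_Collect_eq case_prod_conv by blast
  have n3: "n \<ge> 3" using H by blast
  have pos: "\<And>i j. i<n \<Longrightarrow> j<n \<Longrightarrow> a i j > 0 \<and> a j i = 1 / a i j"
    using H by blast
  define f where "f = (\<lambda>(i, j, k). max (a i j * a j k / a i k) (a i k / (a i j * a j k)))"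
  define S where "S = {(i, j, k). i < j \<and> j < k \<and> k < n}"
  have fin: "finite S"
    by (rule finite_subset[of _ "{..<n} \<times> {..<n} \<times> {..<n}"]) (auto simp: S_def)
  have "(0,1,2) \<in> S" using n3 by (simp add: S_def)
  hence ne: "S \<noteq> {}" by blast
  have nuA: "nu A = Min (f ` S)" unfolding nu_def na f_def S_def by simp
  have "Min (f ` S) \<in> f ` S" using fin ne by (intro Min_in) auto
  then obtain i j k where ijk: "i < j" "j < k" "k < n" and fv: "nu A = f (i, j, k)"
    unfolding nuA S_def by auto
  define \<sigma> where "\<sigma> = (\<lambda>x::nat. if x = 0 then i else if x = 1 then j else k)"
  define T where "T = submatrix A 3 \<sigma>"
  have sl: "\<forall>x<3. \<sigma> x < n" using ijk by (auto simp: \<sigma>_def)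
  have mono: "\<forall>x y. x < y \<and> y < 3 \<longrightarrow> \<sigma> x < \<sigma> y"
  proof (intro allI impI)
    fix x y :: nat assume "x < y \<and> y < 3"
    hence "(x = 0 \<and> y = 1) \<or> (x = 0 \<and> y = 2) \<or> (x = 1 \<and> y = 2)" by arith
    thus "\<sigma> x < \<sigma> y" using ijk by (auto simp: \<sigma>_def)
  qed
  have sub: "is_triad_of T A"
    unfolding is_triad_of_def is_submatrix_def T_def
    apply (intro conjI exI[of _ 3] exI[of _ \<sigma>])
    using n3 na sl mono by (auto simp: submatrix_def)
  have TP: "T \<in> PCM"
    unfolding PCM_def T_def submatrix_def na mem_Collect_eq case_prod_conv fst_conv snd_conv
    apply (intro conjI allI impI)
    subgoal by simp
    subgoal for x y using pos[of "\<sigma> x" "\<sigma> y"] sl by simp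
    subgoal for x y using pos[of "\<sigma> x" "\<sigma> y"] sl by simp
    subgoal by auto
    done
  have "nu T = f (i, j, k)"
    by (simp add: nu3 T_def submatrix_def \<sigma>_def na f_def)
  then show "\<exists>T. is_triad_of T A \<and> sim R5 A T"
    using sub TP A fv sim_R5 by metis
qed

definition Aex :: pcm where
  "Aex = (4, \<lambda>i j. if i < 4 \<and> j < 4 then (if i = 0 \<and> j = 3 then 2 else if i = 3 \<and> j = 0 then 1/2 else 1) else 0)"

lemma notMON: "\<not> MON R5"
proof
  assume M: "MON R5"
  have AP: "Aex \<in> PCM" unfolding PCM_def Aex_def by auto
  define \<sigma> where "\<sigma> = (\<lambda>x::nat. if x = 0 then 0 else if x = 1 then 1 else (3::nat))"
  define T where "T = submatrix Aex 3 \<sigma>"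
  have sub: "is_triad_of T Aex"
    unfolding is_triad_of_def is_submatrix_def T_def
    apply (intro conjI exI[of _ 3] exI[of _ \<sigma>])
    by (auto simp: \<sigma>_def submatrix_def Aex_def)
  have nuT: "nu T = 2" by (simp add: nu3 T_def submatrix_def \<sigma>_def Aex_def)
  have "(0::nat,1::nat,2::nat) \<in> {(i, j, k). i < j \<and> j < k \<and> k < fst Aex}" by (simp add: Aex_def)
  moreover have "finite {(i, j, k). i < j \<and> j < k \<and> k < fst Aex}"
    by (rule finite_subset[of _ "{..<4} \<times> {..<4} \<times> {..<4::nat}"]) (auto simp: Aex_def)
  ultimately have "nu Aex \<le> (\<lambda>(i, j, k). max (snd Aex i j * snd Aex j k / snd Aex i k)
                                   (snd Aex i k / (snd Aex i j * snd Aex j k))) (0,1,2)"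
    unfolding nu_def by (intro Min_le finite_imageI imageI)
  hence "nu Aex \<le> 1" by (simp add: Aex_def)
  moreover have "(T, Aex) \<in> R5" using M AP sub unfolding MON_def by blast
  hence "nu T \<le> nu Aex" unfolding R5_def by simp
  ultimately show False using nuT by linarith
qed

theorem mainTheorem6:
  shows "inconsistency_ranking R5 \<and> PR R5 \<and> IIP R5 \<and> HTE R5 \<and> SI R5 \<and> RED R5
         \<and> \<not> MON R5"
  using ranking PR5 IIP5 HTE5 SI5 RED5 notMON by (intro conjI)

end
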